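(* Let $E$ be a pseudo effect algebra satisfying (RDP). Then $\mathcal J(E)$ is an Abelian Dedekind complete lattice-ordered real vector space (Riesz space) under $\le^+$, and for any $m_1,\dots,m_n\in\mathcal J(E)$ and every $x\in E$: $$\Big(\bigvee_{i=1}^n m_i\Big)(x)=\sup\{m_1(x_1)+\cdots+m_n(x_n):\ x=x_1+\cdots+x_n,\ x_1,\dots,x_n\in E\},$$ $$\Big(\bigwedge_{i=1}^n m_i\Big)(x)=\inf\{m_1(x_1)+\cdots+m_n(x_n):\ x=x_1+\cdots+x_n,\ x_1,\dots,x_n\in E\}.$$
   Context: Pseudo effect algebra: partial algebra $(E;+,0,1)$ such that for all $a,b,c$: (i) $a+b$ and $(a+b)+c$ exist iff $b+c$ and $a+(b+c)$ exist, and then they are equal; (ii) there is exactly one $d$ and one $e$ with $a+d=e+a=1$; (iii) if $a+b$ exists there are $d,e$ with $a+b=d+a=b+e$; (iv) if $1+a$ or $a+1$ exists then $a=0$. (RDP): whenever $a_1+a_2=b_1+b_2$ there are $d_1,\dots,d_4$ with $d_1+d_2=a_1$, $d_3+d_4=a_2$, $d_1+d_3=b_1$, $d_2+d_4=b_2$. A signed measure is $m:E\to\mathbb R$ additive on defined sums; a measure is a nonnegative signed measure; $m_1\le^+m_2$ iff $m_2-m_1$ is a measure. $\mathcal J(E)$ is the set of signed measures that are differences of two measures, with pointwise operations. *)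

theory Defs
  imports Complex_Main "HOL-Library.Function_Algebras"
begin

text \<open>A pseudo effect algebra on the carrier type 'a: partial addition
  given as a function into 'a option (None = undefined), with zero and one.\<close>

definition pea :: "('a \<Rightarrow> 'a \<Rightarrow> 'a option) \<Rightarrow> 'a \<Rightarrow> 'a \<Rightarrow> bool" where
  "pea p z u \<longleftrightarrow>
     (\<forall>a b c. Option.bind (p a b) (\<lambda>ab. p ab c) = Option.bind (p b c) (\<lambda>bc. p a bc)) \<and>
     (\<forall>a. (\<exists>!d. p a d = Some u) \<and> (\<exists>!e. p e a = Some u)) \<and>
     (\<forall>a b s. p a b = Some s \<longrightarrow> (\<exists>d e. p d a = Some s \<and> p b e = Some s)) \<and>
     (\<forall>a. (p u a \<noteq> None \<or> p a u \<noteq> None) \<longrightarrow> a = z)"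

definition RDP :: "('a \<Rightarrow> 'a \<Rightarrow> 'a option) \<Rightarrow> bool" where
  "RDP p \<longleftrightarrow> (\<forall>a1 a2 b1 b2 s. p a1 a2 = Some s \<and> p b1 b2 = Some s \<longrightarrow>
     (\<exists>d1 d2 d3 d4. p d1 d2 = Some a1 \<and> p d3 d4 = Some a2 \<and>
                    p d1 d3 = Some b1 \<and> p d2 d4 = Some b2))"

definition signed_measure :: "('a \<Rightarrow> 'a \<Rightarrow> 'a option) \<Rightarrow> ('a \<Rightarrow> real) \<Rightarrow> bool" where
  "signed_measure p m \<longleftrightarrow> (\<forall>a b s. p a b = Some s \<longrightarrow> m s = m a + m b)"

definition pmeasure :: "('a \<Rightarrow> 'a \<Rightarrow> 'a option) \<Rightarrow> ('a \<Rightarrow> real) \<Rightarrow> bool" where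
  "pmeasure p m \<longleftrightarrow> signed_measure p m \<and> (\<forall>x. 0 \<le> m x)"

definition le_plus :: "('a \<Rightarrow> 'a \<Rightarrow> 'a option) \<Rightarrow> ('a \<Rightarrow> real) \<Rightarrow> ('a \<Rightarrow> real) \<Rightarrow> bool" where
  "le_plus p m1 m2 \<longleftrightarrow> pmeasure p (m2 - m1)"

definition JJ :: "('a \<Rightarrow> 'a \<Rightarrow> 'a option) \<Rightarrow> ('a \<Rightarrow> real) set" where
  "JJ p = {m. \<exists>m1 m2. pmeasure p m1 \<and> pmeasure p m2 \<and> m = m1 - m2}"

text \<open>Iterated partial sum x1 + ... + xn (left-bracketed; undefined for the empty list).\<close>
fun psum :: "('a \<Rightarrow> 'a \<Rightarrow> 'a option) \<Rightarrow> 'a list \<Rightarrow> 'a option" where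
  "psum p [] = None"
| "psum p (x # xs) = foldl (\<lambda>acc y. Option.bind acc (\<lambda>a. p a y)) (Some x) xs"

definition is_lub_in :: "('b \<Rightarrow> 'b \<Rightarrow> bool) \<Rightarrow> 'b set \<Rightarrow> 'b set \<Rightarrow> 'b \<Rightarrow> bool" where
  "is_lub_in le J S l \<longleftrightarrow> l \<in> J \<and> (\<forall>s\<in>S. le s l) \<and> (\<forall>u\<in>J. (\<forall>s\<in>S. le s u) \<longrightarrow> le l u)"

definition is_glb_in :: "('b \<Rightarrow> 'b \<Rightarrow> bool) \<Rightarrow> 'b set \<Rightarrow> 'b set \<Rightarrow> 'b \<Rightarrow> bool" where
  "is_glb_in le J S l \<longleftrightarrow> l \<in> J \<and> (\<forall>s\<in>S. le l s) \<and> (\<forall>u\<in>J. (\<forall>s\<in>S. le u s) \<longrightarrow> le u l)"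

definition riesz_space :: "('a \<Rightarrow> real) set \<Rightarrow> (('a \<Rightarrow> real) \<Rightarrow> ('a \<Rightarrow> real) \<Rightarrow> bool) \<Rightarrow> bool" where
  "riesz_space J le \<longleftrightarrow>
     0 \<in> J \<and> (\<forall>f\<in>J. \<forall>g\<in>J. f + g \<in> J) \<and> (\<forall>f\<in>J. \<forall>c::real. (\<lambda>x. c * f x) \<in> J) \<and>
     (\<forall>f\<in>J. \<forall>g\<in>J. f + g = g + f) \<and>
     (\<forall>f\<in>J. le f f) \<and>
     (\<forall>f\<in>J. \<forall>g\<in>J. le f g \<and> le g f \<longrightarrow> f = g) \<and>
     (\<forall>f\<in>J. \<forall>g\<in>J. \<forall>h\<in>J. le f g \<and> le g h \<longrightarrow> le f h) \<and>
     (\<forall>f\<in>J. \<forall>g\<in>J. \<forall>h\<in>J. le f g \<longrightarrow> le (f + h) (g + h)) \<and>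
     (\<forall>f\<in>J. \<forall>g\<in>J. \<forall>c::real. 0 \<le> c \<and> le f g \<longrightarrow> le (\<lambda>x. c * f x) (\<lambda>x. c * g x)) \<and>
     (\<forall>f\<in>J. \<forall>g\<in>J. (\<exists>l. is_lub_in le J {f, g} l) \<and> (\<exists>l. is_glb_in le J {f, g} l))"

definition dedekind_complete :: "('b \<Rightarrow> 'b \<Rightarrow> bool) \<Rightarrow> 'b set \<Rightarrow> bool" where
  "dedekind_complete le J \<longleftrightarrow>
     (\<forall>S. S \<subseteq> J \<and> S \<noteq> {} \<and> (\<exists>u\<in>J. \<forall>s\<in>S. le s u) \<longrightarrow> (\<exists>l. is_lub_in le J S l))"

end

theory Submission
  imports Defs
begin

lemma pea_assoc1:
  assumes "pea p z u" "p a b = Some ab" "p ab c = Some s"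
  shows "\<exists>bc. p b c = Some bc \<and> p a bc = Some s"
proof -
  have "Option.bind (p a b) (\<lambda>ab. p ab c) = Option.bind (p b c) (\<lambda>bc. p a bc)"
    using assms(1) unfolding pea_def by blast
  with assms(2,3) show ?thesis by (cases "p b c") auto
qed

lemma pea_assoc2:
  assumes "pea p z u" "p b c = Some bc" "p a bc = Some s"
  shows "\<exists>ab. p a b = Some ab \<and> p ab c = Some s"
proof -
  have "Option.bind (p a b) (\<lambda>ab. p ab c) = Option.bind (p b c) (\<lambda>bc. p a bc)"
    using assms(1) unfolding pea_def by blast
  with assms(2,3) show ?thesis by (cases "p a b") auto
qed

lemma pea_swap: assumes "pea p z u" "p a b = Some s" shows "\<exists>e. p b e = Some s"
  using assms unfolding pea_def by blast

lemma pea_iv: assumes "pea p z u" "p u a \<noteq> None \<or> p a u \<noteq> None" shows "a = z"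
  using assms unfolding pea_def by blast

lemma pea_ex_right: assumes "pea p z u" shows "\<exists>d. p a d = Some u"
  using assms unfolding pea_def by blast

lemma pea_ex_left: assumes "pea p z u" shows "\<exists>e. p e a = Some u"
  using assms unfolding pea_def by blast

lemma pea_uniq_right: assumes "pea p z u" "p a d = Some u" "p a d' = Some u" shows "d = d'"
proof -
  have "\<exists>!d. p a d = Some u" using assms(1) unfolding pea_def by blast
  with assms(2,3) show ?thesis by blast
qed

lemma pea_uniq_left: assumes "pea p z u" "p e a = Some u" "p e' a = Some u" shows "e = e'"
proof -
  have "\<exists>!e. p e a = Some u" using assms(1) unfolding pea_def by blast
  with assms(2,3) show ?thesis by blast
qed

lemma pea_zero_right: assumes "pea p z u" shows "p x z = Some x"
proof -
  obtain e where e: "p e x = Some u" using pea_ex_left[OF assms] by blast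
  obtain d where d: "p u d = Some u" using pea_ex_right[OF assms] by blast
  have dz: "d = z" using pea_iv[OF assms] d by simp
  from pea_assoc1[OF assms e d[unfolded dz]] obtain w where w: "p x z = Some w" "p e w = Some u"
    by blast
  have "w = x" using pea_uniq_right[OF assms w(2) e] .
  with w show ?thesis by simp
qed

lemma pea_zero_left: assumes "pea p z u" shows "p z x = Some x"
proof -
  obtain d where d: "p x d = Some u" using pea_ex_right[OF assms] by blast
  obtain e where e: "p e u = Some u" using pea_ex_left[OF assms] by blast
  have ez: "e = z" using pea_iv[OF assms] e by simp
  from pea_assoc2[OF assms d e[unfolded ez]] obtain w where w: "p z x = Some w" "p w d = Some u"
    by blast
  have "w = x" using pea_uniq_left[OF assms w(2) d] .
  with w show ?thesis by simp
qed

lemma sm_add: "signed_measure p m \<Longrightarrow> p a b = Some s \<Longrightarrow> m s = m a + m b"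
  unfolding signed_measure_def by blast

lemma sm_zero: assumes "pea p z u" "signed_measure p m" shows "m z = 0"
  using sm_add[OF assms(2) pea_zero_right[OF assms(1), of z]] by simp

lemma sm_swap:
  assumes "pea p z u" "p a b = Some s"
  obtains e where "p b e = Some s" "\<And>m. signed_measure p m \<Longrightarrow> m e = m a"
proof -
  obtain e where e: "p b e = Some s" using pea_swap[OF assms] by blast
  have "m e = m a" if "signed_measure p m" for m
    using sm_add[OF that e] sm_add[OF that assms(2)] by simp
  with e that show ?thesis by blast
qed

lemma psum_single[simp]: "psum p [x] = Some x" by simp

lemma psum_snoc: "xs \<noteq> [] \<Longrightarrow> psum p (xs @ [y]) = Option.bind (psum p xs) (\<lambda>a. p a y)"
  by (cases xs) auto

lemma psum_measure:
  assumes "signed_measure p v" "psum p xs = Some x"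
  shows "v x = (\<Sum>i<length xs. v (xs ! i))"
  using assms(2)
proof (induction xs arbitrary: x rule: rev_induct)
  case Nil then show ?case by simp
next
  case (snoc y xs)
  show ?case
  proof (cases "xs = []")
    case True then show ?thesis using snoc by simp
  next
    case False
    with snoc.prems obtain a where a: "psum p xs = Some a" "p a y = Some x"
      by (cases "psum p xs") (auto simp: psum_snoc)
    have "v x = v a + v y" using a assms(1) unfolding signed_measure_def by blast
    also have "v a = (\<Sum>i<length xs. v (xs ! i))" using snoc.IH a by blast
    also have "\<dots> = (\<Sum>i<length xs. v ((xs @ [y]) ! i))"
      by (rule sum.cong) (auto simp: nth_append)
    finally show ?thesis by (simp add: sum.lessThan_Suc)
  qed
qed

lemma psum_append:
  assumes "pea p z u" "xs \<noteq> []" "ys \<noteq> []" "psum p xs = Some a" "psum p ys = Some b" "p a b = Some s"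
  shows "psum p (xs @ ys) = Some s"
  using assms(3-6)
proof (induction ys arbitrary: b s rule: rev_induct)
  case Nil then show ?case by simp
next
  case (snoc y ys)
  show ?case
  proof (cases "ys = []")
    case True then show ?thesis using snoc assms(2) by (simp add: psum_snoc)
  next
    case False
    with snoc.prems obtain b0 where b0: "psum p ys = Some b0" "p b0 y = Some b"
      by (cases "psum p ys") (auto simp: psum_snoc)
    from pea_assoc2[OF assms(1) b0(2) snoc.prems(4)] obtain ab where
      ab: "p a b0 = Some ab" "p ab y = Some s" by blast
    have "psum p (xs @ ys) = Some ab" using snoc.IH[OF False snoc.prems(2) b0(1) ab(1)] .
    then show ?thesis using ab assms(2) psum_snoc[of "xs @ ys" p y] by simp
  qed
qed


lemma gen_RDP:
  assumes "pea p z u" "RDP p" "psum p xs = Some s" "p a b = Some s"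
  shows "\<exists>as bs. length as = length xs \<and> length bs = length xs \<and> psum p as = Some a \<and>
     psum p bs = Some b \<and> (\<forall>i<length xs. p (as!i) (bs!i) = Some (xs!i))"
  using assms(3,4)
proof (induction xs arbitrary: s a b rule: rev_induct)
  case Nil then show ?case by simp
next
  case (snoc y xs)
  show ?case
  proof (cases "xs = []")
    case True then show ?thesis using snoc
      by (intro exI[of _ "[a]"] exI[of _ "[b]"]) auto
  next
    case False
    with snoc.prems obtain C where C: "psum p xs = Some C" "p C y = Some s"
      by (cases "psum p xs") (auto simp: psum_snoc)
    from assms(2) C(2) snoc.prems(2) obtain d1 d2 d3 d4 where
      d: "p d1 d2 = Some C" "p d3 d4 = Some y" "p d1 d3 = Some a" "p d2 d4 = Some b"
      unfolding RDP_def by blast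
    from snoc.IH[OF C(1) d(1)] obtain as bs where
      ih: "length as = length xs" "length bs = length xs" "psum p as = Some d1"
      "psum p bs = Some d2" "\<forall>i<length xs. p (as!i) (bs!i) = Some (xs!i)" by blast
    have ne: "as \<noteq> []" "bs \<noteq> []" using ih(1,2) False by auto
    show ?thesis
    proof (rule exI[of _ "as @ [d3]"], rule exI[of _ "bs @ [d4]"], intro conjI allI impI)
      show "psum p (as @ [d3]) = Some a" using ne ih d by (simp add: psum_snoc)
      show "psum p (bs @ [d4]) = Some b" using ne ih d by (simp add: psum_snoc)
      fix i assume "i < length (xs @ [y])"
      then show "p ((as @ [d3]) ! i) ((bs @ [d4]) ! i) = Some ((xs @ [y]) ! i)"
        using ih d by (cases "i < length xs") (auto simp: nth_append)
    qed (use ih in auto)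
  qed
qed

lemma sum_split_add: fixes F :: "nat \<Rightarrow> real" shows "(\<Sum>i<n+k. F i) = (\<Sum>i<n. F i) + (\<Sum>i<k. F (n+i))"
  by (induct k) (simp_all add: add.assoc)

lemma pm_sm: "pmeasure p m \<Longrightarrow> signed_measure p m"
  unfolding pmeasure_def by blast

lemma sm_diff: "signed_measure p f \<Longrightarrow> signed_measure p g \<Longrightarrow> signed_measure p (f - g)"
  unfolding signed_measure_def by auto

lemma sm_plus: "signed_measure p f \<Longrightarrow> signed_measure p g \<Longrightarrow> signed_measure p (f + g)"
  unfolding signed_measure_def by auto

lemma sm_uminus: "signed_measure p f \<Longrightarrow> signed_measure p (- f)"
  unfolding signed_measure_def by auto

lemma sm_scale: "signed_measure p f \<Longrightarrow> signed_measure p (\<lambda>x. c * f x)"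
  unfolding signed_measure_def by (auto simp: algebra_simps)

lemma pm_plus: "pmeasure p f \<Longrightarrow> pmeasure p g \<Longrightarrow> pmeasure p (f + g)"
  unfolding pmeasure_def using sm_plus by (auto intro: add_nonneg_nonneg)

lemma pm_scale: "pmeasure p f \<Longrightarrow> 0 \<le> c \<Longrightarrow> pmeasure p (\<lambda>x. c * f x)"
  unfolding pmeasure_def using sm_scale by auto

lemma pm_zero: "pmeasure p 0"
  unfolding pmeasure_def signed_measure_def by auto

lemma JJ_sm: "f \<in> JJ p \<Longrightarrow> signed_measure p f"
  unfolding JJ_def using pm_sm sm_diff by blast

lemma JJ_decomp: "f \<in> JJ p \<Longrightarrow> \<exists>f1 f2. pmeasure p f1 \<and> pmeasure p f2 \<and> f = f1 - f2"
  unfolding JJ_def by blast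

lemma le_plus_iff:
  "signed_measure p f \<Longrightarrow> signed_measure p g \<Longrightarrow> le_plus p f g \<longleftrightarrow> (\<forall>x. f x \<le> g x)"
  unfolding le_plus_def pmeasure_def using sm_diff by auto

lemma le_plus_JJ: "f \<in> JJ p \<Longrightarrow> g \<in> JJ p \<Longrightarrow> le_plus p f g \<longleftrightarrow> (\<forall>x. f x \<le> g x)"
  using le_plus_iff JJ_sm by blast

lemma JJ_of_le:
  assumes "signed_measure p h" "f \<in> JJ p" "\<forall>x. f x \<le> h x"
  shows "h \<in> JJ p"
proof -
  obtain f1 f2 where f: "pmeasure p f1" "pmeasure p f2" "f = f1 - f2" using JJ_decomp[OF assms(2)] by blast
  have "pmeasure p (h - f)" unfolding pmeasure_def
    using sm_diff[OF assms(1) JJ_sm[OF assms(2)]] assms(3) by auto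
  then have "pmeasure p ((h - f) + f1)" using pm_plus f by blast
  moreover have "h = ((h - f) + f1) - f2" using f by (auto simp: fun_eq_iff)
  ultimately show ?thesis using f unfolding JJ_def by blast
qed

lemma JJ_uminus: "f \<in> JJ p \<Longrightarrow> - f \<in> JJ p"
proof -
  assume "f \<in> JJ p"
  then obtain f1 f2 where f: "pmeasure p f1" "pmeasure p f2" "f = f1 - f2" unfolding JJ_def by blast
  have "- f = f2 - f1" by (simp add: f(3) fun_eq_iff)
  then show ?thesis unfolding JJ_def using f by blast
qed

lemma JJ_plus: "f \<in> JJ p \<Longrightarrow> g \<in> JJ p \<Longrightarrow> f + g \<in> JJ p"
proof -
  assume "f \<in> JJ p" "g \<in> JJ p"
  then obtain f1 f2 g1 g2 where f: "pmeasure p f1" "pmeasure p f2" "f = f1 - f2"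
    and g: "pmeasure p g1" "pmeasure p g2" "g = g1 - g2" unfolding JJ_def by blast
  have "f + g = (f1 + g1) - (f2 + g2)" by (simp add: f(3) g(3) fun_eq_iff)
  moreover have "pmeasure p (f1 + g1)" "pmeasure p (f2 + g2)" using pm_plus f g by blast+
  ultimately show ?thesis unfolding JJ_def by blast
qed

lemma JJ_zero: "0 \<in> JJ p"
  unfolding JJ_def using pm_zero by (intro CollectI exI[of _ 0]) (auto simp: fun_eq_iff)

lemma JJ_scale: "f \<in> JJ p \<Longrightarrow> (\<lambda>x. c * f x) \<in> JJ p"
proof -
  assume "f \<in> JJ p"
  then obtain f1 f2 where f: "pmeasure p f1" "pmeasure p f2" "f = f1 - f2" unfolding JJ_def by blast
  show ?thesis
  proof (cases "0 \<le> c")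
    case True
    have "(\<lambda>x. c * f x) = (\<lambda>x. c * f1 x) - (\<lambda>x. c * f2 x)" by (simp add: f(3) fun_eq_iff right_diff_distrib)
    then show ?thesis unfolding JJ_def using pm_scale[OF f(1) True] pm_scale[OF f(2) True] by blast
  next
    case False
    have "(\<lambda>x. c * f x) = (\<lambda>x. (-c) * f2 x) - (\<lambda>x. (-c) * f1 x)" by (simp add: f(3) fun_eq_iff algebra_simps)
    moreover have "0 \<le> -c" using False by simp
    ultimately show ?thesis unfolding JJ_def using pm_scale[OF f(2), of "-c"] pm_scale[OF f(1), of "-c"] by blast
  qed
qed

lemma JJ_bound_above:
  assumes "f \<in> JJ p" obtains f1 where "pmeasure p f1" "\<And>x. f x \<le> f1 x"
proof -
  obtain f1 f2 where f: "pmeasure p f1" "pmeasure p f2" "f = f1 - f2" using JJ_decomp[OF assms] by blast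
  then have "\<And>x. f x \<le> f1 x" unfolding pmeasure_def by auto
  with f that show ?thesis by blast
qed

lemma pm_le_sum: "pmeasure p f \<Longrightarrow> p a b = Some x \<Longrightarrow> f a \<le> f x \<and> f b \<le> f x"
  unfolding pmeasure_def signed_measure_def by force

definition S2 :: "('a \<Rightarrow> 'a \<Rightarrow> 'a option) \<Rightarrow> ('a \<Rightarrow> real) \<Rightarrow> ('a \<Rightarrow> real) \<Rightarrow> 'a \<Rightarrow> real set" where
  "S2 p f g x = {f a + g b | a b. p a b = Some x}"

lemma sup2:
  assumes pea: "pea p z u" and rdp: "RDP p" and fJ: "f \<in> JJ p" and gJ: "g \<in> JJ p"
  shows "(\<forall>x. S2 p f g x \<noteq> {} \<and> bdd_above (S2 p f g x)) \<and>
         is_lub_in (le_plus p) (JJ p) {f, g} (\<lambda>x. Sup (S2 p f g x))"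
proof -
  have fs: "signed_measure p f" and gs: "signed_measure p g" using fJ gJ JJ_sm by blast+
  obtain f1 where f1: "pmeasure p f1" "\<And>x. f x \<le> f1 x" using JJ_bound_above[OF fJ] by blast
  obtain g1 where g1: "pmeasure p g1" "\<And>x. g x \<le> g1 x" using JJ_bound_above[OF gJ] by blast
  have ne: "S2 p f g x \<noteq> {}" for x
    using pea_zero_right[OF pea, of x] unfolding S2_def by blast
  have bdd: "bdd_above (S2 p f g x)" for x
  proof (rule bdd_aboveI)
    fix e assume "e \<in> S2 p f g x"
    then obtain a b where ab: "p a b = Some x" "e = f a + g b" unfolding S2_def by blast
    have "f a \<le> f1 x" using f1(2)[of a] pm_le_sum[OF f1(1) ab(1)] by linarith
    moreover have "g b \<le> g1 x" using g1(2)[of b] pm_le_sum[OF g1(1) ab(1)] by linarith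
    ultimately show "e \<le> f1 x + g1 x" using ab by simp
  qed
  define h where "h = (\<lambda>x. Sup (S2 p f g x))"
  have hx: "h x = Sup (S2 p f g x)" for x by (simp add: h_def)
  have mem: "f a + g b \<in> S2 p f g x" if "p a b = Some x" for a b x
    using that unfolding S2_def by blast
  have up: "f a + g b \<le> h x" if "p a b = Some x" for a b x
    unfolding h_def using cSup_upper[OF mem[OF that] bdd] .
  have hf: "f x \<le> h x" for x
    using up[OF pea_zero_right[OF pea, of x]] sm_zero[OF pea gs] by simp
  have hg: "g x \<le> h x" for x
    using up[OF pea_zero_left[OF pea, of x]] sm_zero[OF pea fs] by simp
  have hadd: "h c = h a + h b" if abc: "p a b = Some c" for a b c
  proof (rule antisym)
    show "h c \<le> h a + h b" unfolding hx[of c]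
    proof (rule cSup_least[OF ne])
      fix e assume "e \<in> S2 p f g c"
      then obtain c1 c2 where cc: "p c1 c2 = Some c" "e = f c1 + g c2" unfolding S2_def by blast
      from rdp cc(1) abc obtain d1 d2 d3 d4 where
        d: "p d1 d2 = Some c1" "p d3 d4 = Some c2" "p d1 d3 = Some a" "p d2 d4 = Some b"
        unfolding RDP_def by blast
      have "e = (f d1 + g d3) + (f d2 + g d4)"
        using cc sm_add[OF fs d(1)] sm_add[OF gs d(2)] by simp
      also have "\<dots> \<le> h a + h b" using up[OF d(3)] up[OF d(4)] by simp
      finally show "e \<le> h a + h b" .
    qed
  next
    have key: "e1 + e2 \<le> h c" if e1: "e1 \<in> S2 p f g a" and e2: "e2 \<in> S2 p f g b" for e1 e2
    proof -
      obtain a1 a2 where A: "p a1 a2 = Some a" "e1 = f a1 + g a2" using e1 unfolding S2_def by blast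
      obtain b1 b2 where B: "p b1 b2 = Some b" "e2 = f b1 + g b2" using e2 unfolding S2_def by blast
      obtain r where r: "p a2 b = Some r" "p a1 r = Some c" using pea_assoc1[OF pea A(1) abc] by blast
      obtain t where t: "p a2 b1 = Some t" "p t b2 = Some r" using pea_assoc2[OF pea B(1) r(1)] by blast
      obtain e where e: "p b1 e = Some t" "g e = g a2" using sm_swap[OF pea t(1)] gs by metis
      obtain q where q: "p e b2 = Some q" "p b1 q = Some r" using pea_assoc1[OF pea e(1) t(2)] by blast
      obtain k where k: "p a1 b1 = Some k" "p k q = Some c" using pea_assoc2[OF pea q(2) r(2)] by blast
      have "e1 + e2 = f k + g q"
        using A B e sm_add[OF fs k(1)] sm_add[OF gs q(1)] by simp
      also have "\<dots> \<le> h c" using up[OF k(2)] .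
      finally show ?thesis .
    qed
    have ha: "h a \<le> h c - e2" if e2: "e2 \<in> S2 p f g b" for e2
      unfolding hx[of a]
    proof (rule cSup_least[OF ne])
      fix e1 assume "e1 \<in> S2 p f g a"
      then show "e1 \<le> h c - e2" using key[OF _ e2] by fastforce
    qed
    have "h b \<le> h c - h a"
      unfolding hx[of b]
    proof (rule cSup_least[OF ne])
      fix e2 assume "e2 \<in> S2 p f g b"
      then show "e2 \<le> h c - h a" using ha by fastforce
    qed
    then show "h a + h b \<le> h c" by simp
  qed
  have hs: "signed_measure p h" unfolding signed_measure_def using hadd by blast
  have hJ: "h \<in> JJ p" using JJ_of_le[OF hs fJ] hf by blast
  have least: "le_plus p h v" if vJ: "v \<in> JJ p" and vf: "le_plus p f v" and vg: "le_plus p g v" for v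
  proof -
    have vs: "signed_measure p v" using vJ JJ_sm by blast
    have "h x \<le> v x" for x unfolding h_def
    proof (rule cSup_least[OF ne])
      fix e assume "e \<in> S2 p f g x"
      then obtain a b where ab: "p a b = Some x" "e = f a + g b" unfolding S2_def by blast
      have "f a \<le> v a" "g b \<le> v b" using vf vg le_plus_iff fs gs vs by blast+
      then show "e \<le> v x" using ab sm_add[OF vs ab(1)] by simp
    qed
    then show ?thesis using le_plus_iff[OF hs vs] by blast
  qed
  have "is_lub_in (le_plus p) (JJ p) {f, g} h"
    unfolding is_lub_in_def using hJ least le_plus_iff[OF fs hs] le_plus_iff[OF gs hs] hf hg by auto
  then show ?thesis using ne bdd unfolding h_def by auto
qed

definition Dn :: "('a \<Rightarrow> 'a \<Rightarrow> 'a option) \<Rightarrow> nat \<Rightarrow> (nat \<Rightarrow> 'a \<Rightarrow> real) \<Rightarrow> 'a \<Rightarrow> real set" where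
  "Dn p n m x = {(\<Sum>i<n. m i (xs ! i)) | xs. length xs = n \<and> psum p xs = Some x}"

lemma sum_snoc_idx:
  fixes m :: "nat \<Rightarrow> 'a \<Rightarrow> real"
  assumes "length ys = n"
  shows "(\<Sum>i<Suc n. m i ((ys @ [y]) ! i)) = (\<Sum>i<n. m i (ys ! i)) + m n y"
proof -
  have "(\<Sum>i<n. m i ((ys @ [y]) ! i)) = (\<Sum>i<n. m i (ys ! i))"
    by (rule sum.cong) (use assms in \<open>auto simp: nth_append\<close>)
  then show ?thesis using assms by (simp add: sum.lessThan_Suc nth_append)
qed

lemma le_plus_trans_JJ:
  assumes "f \<in> JJ p" "g \<in> JJ p" "h \<in> JJ p" "le_plus p f g" "le_plus p g h"
  shows "le_plus p f h"
proof -
  have "\<forall>x. f x \<le> g x" "\<forall>x. g x \<le> h x"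
    using assms le_plus_JJ[OF assms(1,2)] le_plus_JJ[OF assms(2,3)] by blast+
  then have "\<forall>x. f x \<le> h x" using order_trans by blast
  then show ?thesis using le_plus_JJ[OF assms(1,3)] by blast
qed

lemma nary:
  assumes pea: "pea p z u" and rdp: "RDP p"
  shows "n \<ge> 1 \<Longrightarrow> (\<forall>i<n. m i \<in> JJ p) \<Longrightarrow> (\<forall>x. Dn p n m x \<noteq> {} \<and> bdd_above (Dn p n m x)) \<and>
    is_lub_in (le_plus p) (JJ p) (m ` {..<n}) (\<lambda>x. Sup (Dn p n m x))"
proof (induction n)
  case 0 then show ?case by simp
next
  case (Suc n)
  show ?case
  proof (cases "n = 0")
    case True
    have D1: "Dn p (Suc 0) m x = {m 0 x}" for x
    proof
      show "Dn p (Suc 0) m x \<subseteq> {m 0 x}"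
      proof
        fix e assume "e \<in> Dn p (Suc 0) m x"
        then obtain xs where xs: "length xs = Suc 0" "psum p xs = Some x" "e = m 0 (xs ! 0)"
          unfolding Dn_def by auto
        then obtain y where "xs = [y]" by (auto simp: length_Suc_conv)
        then show "e \<in> {m 0 x}" using xs by simp
      qed
      show "{m 0 x} \<subseteq> Dn p (Suc 0) m x"
        unfolding Dn_def by (auto intro!: exI[of _ "[x]"])
    qed
    have m0: "m 0 \<in> JJ p" using Suc.prems True by simp
    have img: "m ` {..<Suc n} = {m 0}" using True by auto
    have "(\<lambda>x. Sup (Dn p (Suc n) m x)) = m 0" using True D1 by (simp add: fun_eq_iff)
    moreover have "is_lub_in (le_plus p) (JJ p) {m 0} (m 0)"
      unfolding is_lub_in_def using m0 le_plus_JJ by blast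
    ultimately show ?thesis using D1 True img by simp
  next
    case False
    have mJ: "\<forall>i<n. m i \<in> JJ p" and mnJ: "m n \<in> JJ p" using Suc.prems by auto
    from Suc.IH[OF _ mJ] False have IH:
      "\<forall>x. Dn p n m x \<noteq> {} \<and> bdd_above (Dn p n m x)"
      "is_lub_in (le_plus p) (JJ p) (m ` {..<n}) (\<lambda>x. Sup (Dn p n m x))" by auto
    define Jn where "Jn = (\<lambda>x. Sup (Dn p n m x))"
    have JnJ: "Jn \<in> JJ p" using IH(2) unfolding is_lub_in_def Jn_def by blast
    note S = sup2[OF pea rdp JnJ mnJ]
    define h where "h = (\<lambda>x. Sup (S2 p Jn (m n) x))"
    have key: "Dn p (Suc n) m x \<noteq> {} \<and> bdd_above (Dn p (Suc n) m x) \<and>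
       Sup (Dn p (Suc n) m x) = h x" for x
    proof -
      let ?A = "Dn p (Suc n) m x" and ?B = "S2 p Jn (m n) x"
      have neB: "?B \<noteq> {}" and bddB: "bdd_above ?B" using S by auto
      have a: "\<exists>e'\<in>?B. e \<le> e'" if eA: "e \<in> ?A" for e
      proof -
        obtain xs where xs: "length xs = Suc n" "psum p xs = Some x" "e = (\<Sum>i<Suc n. m i (xs ! i))"
          using eA unfolding Dn_def by blast
        define ys where "ys = butlast xs"
        define y where "y = last xs"
        have xsyy: "xs = ys @ [y]" unfolding ys_def y_def using xs(1)
          by (metis append_butlast_last_id list.size(3) nat.distinct(1))
        have lys: "length ys = n" using xs(1) unfolding ys_def by simp
        then have "ys \<noteq> []" using False by auto
        then obtain a where a: "psum p ys = Some a" "p a y = Some x" using xs(2) xsyy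
          by (cases "psum p ys") (auto simp: psum_snoc)
        have e: "e = (\<Sum>i<n. m i (ys ! i)) + m n y" using xs(3) xsyy sum_snoc_idx[OF lys] by simp
        have "(\<Sum>i<n. m i (ys ! i)) \<in> Dn p n m a" unfolding Dn_def using lys a by blast
        then have "(\<Sum>i<n. m i (ys ! i)) \<le> Jn a" unfolding Jn_def using IH(1) cSup_upper by blast
        moreover have "Jn a + m n y \<in> ?B" unfolding S2_def using a by blast
        ultimately show ?thesis using e by (intro bexI[of _ "Jn a + m n y"]) auto
      qed
      have bddA: "bdd_above ?A"
      proof (rule bdd_aboveI)
        fix e assume "e \<in> ?A"
        then obtain e' where "e' \<in> ?B" "e \<le> e'" using a by blast
        then show "e \<le> Sup ?B" using cSup_upper[OF _ bddB] by fastforce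
      qed
      have neA: "?A \<noteq> {}"
      proof -
        obtain e where "e \<in> Dn p n m x" using IH(1) by blast
        then obtain ys where ys: "length ys = n" "psum p ys = Some x" unfolding Dn_def by auto
        then have "ys \<noteq> []" using False by auto
        then have "psum p (ys @ [z]) = Some x" using ys pea_zero_right[OF pea] by (simp add: psum_snoc)
        then have "(\<Sum>i<Suc n. m i ((ys @ [z]) ! i)) \<in> ?A" unfolding Dn_def using ys by auto
        then show ?thesis by blast
      qed
      have b: "e' \<le> Sup ?A" if eB: "e' \<in> ?B" for e'
      proof -
        obtain a b where ab: "p a b = Some x" "e' = Jn a + m n b" using eB unfolding S2_def by blast
        have "Jn a \<le> Sup ?A - m n b" unfolding Jn_def
        proof (rule cSup_least)
          show "Dn p n m a \<noteq> {}" using IH(1) by blast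
          fix e assume "e \<in> Dn p n m a"
          then obtain ys where ys: "length ys = n" "psum p ys = Some a" "e = (\<Sum>i<n. m i (ys ! i))"
            unfolding Dn_def by auto
          then have "ys \<noteq> []" using False by auto
          then have "psum p (ys @ [b]) = Some x" using ys ab by (simp add: psum_snoc)
          then have "(\<Sum>i<Suc n. m i ((ys @ [b]) ! i)) \<in> ?A" unfolding Dn_def using ys by auto
          then have "e + m n b \<le> Sup ?A" using cSup_upper[OF _ bddA] sum_snoc_idx[OF ys(1)] ys(3) by simp
          then show "e \<le> Sup ?A - m n b" by simp
        qed
        then show ?thesis using ab by simp
      qed
      have "Sup ?A \<le> Sup ?B"
      proof (rule cSup_least[OF neA])
        fix e assume "e \<in> ?A"
        then obtain e' where "e' \<in> ?B" "e \<le> e'" using a by blast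
        then show "e \<le> Sup ?B" using cSup_upper[OF _ bddB] by fastforce
      qed
      moreover have "Sup ?B \<le> Sup ?A" using b by (intro cSup_least[OF neB]) auto
      ultimately show ?thesis using neA bddA unfolding h_def by simp
    qed
    have Heq: "(\<lambda>x. Sup (Dn p (Suc n) m x)) = h" using key by (simp add: fun_eq_iff)
    have lub2: "is_lub_in (le_plus p) (JJ p) {Jn, m n} h" using S unfolding h_def by blast
    have hJ: "h \<in> JJ p" using lub2 unfolding is_lub_in_def by blast
    have "is_lub_in (le_plus p) (JJ p) (m ` {..<Suc n}) h"
      unfolding is_lub_in_def
    proof (intro conjI ballI impI)
      show "h \<in> JJ p" by fact
      fix s assume "s \<in> m ` {..<Suc n}"
      then obtain i where i: "i < Suc n" "s = m i" by blast
      show "le_plus p s h"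
      proof (cases "i < n")
        case True
        have "le_plus p (m i) Jn" using IH(2) True unfolding is_lub_in_def Jn_def by blast
        moreover have "le_plus p Jn h" using lub2 unfolding is_lub_in_def by blast
        ultimately show ?thesis using le_plus_trans_JJ[OF _ JnJ hJ] mJ True i by blast
      next
        case False
        then have "i = n" using i by simp
        then show ?thesis using lub2 i unfolding is_lub_in_def by blast
      qed
    next
      fix v assume v: "v \<in> JJ p" "\<forall>s\<in>m ` {..<Suc n}. le_plus p s v"
      then have "le_plus p Jn v" using IH(2) unfolding is_lub_in_def Jn_def by auto
      moreover have "le_plus p (m n) v" using v by auto
      ultimately show "le_plus p h v" using lub2 v(1) unfolding is_lub_in_def by blast
    qed
    then show ?thesis using key Heq by simp
  qed
qed

lemma le_plus_neg: "le_plus p (- g) (- f) = le_plus p f g"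
proof -
  have "(- f) - (- g) = g - f" by (simp add: fun_eq_iff)
  then show ?thesis unfolding le_plus_def by simp
qed

lemma glb_from_lub:
  assumes "is_lub_in (le_plus p) (JJ p) ((\<lambda>i. - m i) ` A) l"
  shows "is_glb_in (le_plus p) (JJ p) (m ` A) (- l)"
  unfolding is_glb_in_def
proof (intro conjI ballI impI)
  have lJ: "l \<in> JJ p" and up: "\<And>i. i \<in> A \<Longrightarrow> le_plus p (- m i) l"
    and least: "\<And>v. v \<in> JJ p \<Longrightarrow> (\<forall>i\<in>A. le_plus p (- m i) v) \<Longrightarrow> le_plus p l v"
    using assms unfolding is_lub_in_def by auto
  show "- l \<in> JJ p" using JJ_uminus[OF lJ] .
  fix s assume "s \<in> m ` A"
  then obtain i where i: "i \<in> A" "s = m i" by blast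
  show "le_plus p (- l) s" using up[OF i(1)] le_plus_neg[where f="- l" and g="m i"] i by simp
next
  have lJ: "l \<in> JJ p"
    and least: "\<And>v. v \<in> JJ p \<Longrightarrow> (\<forall>i\<in>A. le_plus p (- m i) v) \<Longrightarrow> le_plus p l v"
    using assms unfolding is_lub_in_def by auto
  fix v assume v: "v \<in> JJ p" "\<forall>s\<in>m ` A. le_plus p v s"
  have "\<forall>i\<in>A. le_plus p (- m i) (- v)" using v(2) le_plus_neg[where f=v and g="m i" for i] by simp
  then have "le_plus p l (- v)" using least[OF JJ_uminus[OF v(1)]] by blast
  then show "le_plus p v (- l)" using le_plus_neg[where f=v and g="- l"] by simp
qed

lemma Dn_neg: "Dn p n (\<lambda>i. - m i) x = uminus ` Dn p n m x"
  unfolding Dn_def by (auto simp: sum_negf image_iff)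

lemma bdd_below_of_neg: "bdd_above (uminus ` X) \<Longrightarrow> bdd_below (X :: real set)"
proof -
  assume "bdd_above (uminus ` X)"
  then obtain M where M: "\<forall>y\<in>uminus ` X. y \<le> M" by (auto simp: bdd_above_def)
  have "- M \<le> x" if "x \<in> X" for x using M that by force
  then show ?thesis by (rule bdd_belowI)
qed

definition EE :: "('a \<Rightarrow> 'a \<Rightarrow> 'a option) \<Rightarrow> ('a \<Rightarrow> real) set \<Rightarrow> 'a \<Rightarrow> real set" where
  "EE p S x = {(\<Sum>i<length xs. s i (xs ! i)) | xs s. xs \<noteq> [] \<and> psum p xs = Some x \<and> (\<forall>i<length xs. s i \<in> S)}"

lemma dc:
  assumes pea: "pea p z u" and rdp: "RDP p" and SJ: "S \<subseteq> JJ p" and Sne: "S \<noteq> {}"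
    and wJ: "w \<in> JJ p" and wS: "\<forall>s\<in>S. le_plus p s w"
  shows "\<exists>l. is_lub_in (le_plus p) (JJ p) S l"
proof -
  have sS: "signed_measure p s" if "s \<in> S" for s using that SJ JJ_sm by blast
  have ws: "signed_measure p w" using wJ JJ_sm by blast
  have sw: "s x \<le> w x" if "s \<in> S" for s x using wS that le_plus_JJ[OF _ wJ] SJ by blast
  obtain s0 where s0: "s0 \<in> S" using Sne by blast
  have single: "s x \<in> EE p S x" if "s \<in> S" for s x
  proof -
    have "\<exists>xs t. s x = (\<Sum>i<length xs. t i (xs!i)) \<and> xs \<noteq> [] \<and> psum p xs = Some x \<and> (\<forall>i<length xs. t i \<in> S)"
      by (rule exI[of _ "[x]"], rule exI[of _ "\<lambda>_. s"]) (use that in simp)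
    then show ?thesis unfolding EE_def by blast
  qed
  have ne: "EE p S x \<noteq> {}" for x using single[OF s0] by blast
  have bdd: "bdd_above (EE p S x)" for x
  proof (rule bdd_aboveI)
    fix e assume "e \<in> EE p S x"
    then obtain xs s where xs: "psum p xs = Some x" "\<forall>i<length xs. s i \<in> S"
      "e = (\<Sum>i<length xs. s i (xs ! i))" unfolding EE_def by blast
    have "e \<le> (\<Sum>i<length xs. w (xs ! i))" unfolding xs(3) using xs(2) sw by (intro sum_mono) auto
    also have "\<dots> = w x" using psum_measure[OF ws xs(1)] by simp
    finally show "e \<le> w x" .
  qed
  define j where "j = (\<lambda>x. Sup (EE p S x))"
  have jx: "j x = Sup (EE p S x)" for x by (simp add: j_def)
  have up: "e \<le> j x" if "e \<in> EE p S x" for e x using cSup_upper[OF that bdd] jx by simp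
  have js: "s x \<le> j x" if "s \<in> S" for s x using up[OF single[OF that]] .
  have jadd: "j c = j a + j b" if abc: "p a b = Some c" for a b c
  proof (rule antisym)
    show "j c \<le> j a + j b" unfolding jx[of c]
    proof (rule cSup_least[OF ne])
      fix e assume "e \<in> EE p S c"
      then obtain xs s where xs: "xs \<noteq> []" "psum p xs = Some c" "\<forall>i<length xs. s i \<in> S"
        "e = (\<Sum>i<length xs. s i (xs ! i))" unfolding EE_def by blast
      obtain as bs where ab: "length as = length xs" "length bs = length xs" "psum p as = Some a"
        "psum p bs = Some b" "\<forall>i<length xs. p (as!i) (bs!i) = Some (xs!i)"
        using gen_RDP[OF pea rdp xs(2) abc] by blast
      have "e = (\<Sum>i<length xs. s i (as ! i) + s i (bs ! i))"
        unfolding xs(4)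
      proof (rule sum.cong)
        fix i assume "i \<in> {..<length xs}"
        then have "i < length xs" by simp
        then show "s i (xs ! i) = s i (as ! i) + s i (bs ! i)"
          using sm_add[OF sS[of "s i"] ab(5)[rule_format]] xs(3) by blast
      qed simp
      also have "\<dots> = (\<Sum>i<length as. s i (as ! i)) + (\<Sum>i<length bs. s i (bs ! i))"
        using ab(1,2) by (simp add: sum.distrib)
      also have "\<dots> \<le> j a + j b"
      proof (rule add_mono)
        have "as \<noteq> []" "\<forall>i<length as. s i \<in> S" using ab xs by auto
        then show "(\<Sum>i<length as. s i (as ! i)) \<le> j a"
          using ab by (intro up) (unfold EE_def, blast)
        have "bs \<noteq> []" "\<forall>i<length bs. s i \<in> S" using ab xs by auto
        then show "(\<Sum>i<length bs. s i (bs ! i)) \<le> j b"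
          using ab by (intro up) (unfold EE_def, blast)
      qed
      finally show "e \<le> j a + j b" .
    qed
  next
    have key: "e1 + e2 \<le> j c" if e1: "e1 \<in> EE p S a" and e2: "e2 \<in> EE p S b" for e1 e2
    proof -
      obtain xs s where xs: "xs \<noteq> []" "psum p xs = Some a" "\<forall>i<length xs. s i \<in> S"
        "e1 = (\<Sum>i<length xs. s i (xs ! i))" using e1 unfolding EE_def by blast
      obtain ys t where ys: "ys \<noteq> []" "psum p ys = Some b" "\<forall>i<length ys. t i \<in> S"
        "e2 = (\<Sum>i<length ys. t i (ys ! i))" using e2 unfolding EE_def by blast
      define r where "r = (\<lambda>i. if i < length xs then s i else t (i - length xs))"
      have ps: "psum p (xs @ ys) = Some c" using psum_append[OF pea xs(1) ys(1) xs(2) ys(2) abc] .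
      have rS: "\<forall>i<length (xs @ ys). r i \<in> S" using xs(3) ys(3) unfolding r_def by auto
      have "(\<Sum>i<length (xs @ ys). r i ((xs @ ys) ! i)) =
          (\<Sum>i<length xs. r i ((xs @ ys) ! i)) + (\<Sum>i<length ys. r (length xs + i) ((xs @ ys) ! (length xs + i)))"
        using sum_split_add by simp
      also have "(\<Sum>i<length xs. r i ((xs @ ys) ! i)) = e1"
        unfolding xs(4) by (rule sum.cong) (auto simp: r_def nth_append)
      also have "(\<Sum>i<length ys. r (length xs + i) ((xs @ ys) ! (length xs + i))) = e2"
        unfolding ys(4) by (rule sum.cong) (auto simp: r_def nth_append)
      finally have "e1 + e2 = (\<Sum>i<length (xs @ ys). r i ((xs @ ys) ! i))" by simp
      moreover have "(\<Sum>i<length (xs @ ys). r i ((xs @ ys) ! i)) \<in> EE p S c"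
        unfolding EE_def using ps rS xs(1) by blast
      ultimately show ?thesis using up by simp
    qed
    have ja: "j a \<le> j c - e2" if e2: "e2 \<in> EE p S b" for e2
      unfolding jx[of a]
    proof (rule cSup_least[OF ne])
      fix e1 assume "e1 \<in> EE p S a"
      then show "e1 \<le> j c - e2" using key[OF _ e2] by fastforce
    qed
    have "j b \<le> j c - j a"
      unfolding jx[of b]
    proof (rule cSup_least[OF ne])
      fix e2 assume "e2 \<in> EE p S b"
      then show "e2 \<le> j c - j a" using ja by fastforce
    qed
    then show "j a + j b \<le> j c" by simp
  qed
  have jsm: "signed_measure p j" unfolding signed_measure_def using jadd by blast
  have jJ: "j \<in> JJ p" using JJ_of_le[OF jsm] SJ s0 js by blast
  have "is_lub_in (le_plus p) (JJ p) S j"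
    unfolding is_lub_in_def
  proof (intro conjI ballI impI)
    show "j \<in> JJ p" by fact
    fix s assume "s \<in> S" then show "le_plus p s j" using le_plus_iff[OF sS jsm] js by blast
  next
    fix v assume v: "v \<in> JJ p" "\<forall>s\<in>S. le_plus p s v"
    have vs: "signed_measure p v" using v JJ_sm by blast
    have "j x \<le> v x" for x unfolding jx
    proof (rule cSup_least[OF ne])
      fix e assume "e \<in> EE p S x"
      then obtain xs s where xs: "psum p xs = Some x" "\<forall>i<length xs. s i \<in> S"
        "e = (\<Sum>i<length xs. s i (xs ! i))" unfolding EE_def by blast
      have "e \<le> (\<Sum>i<length xs. v (xs ! i))" unfolding xs(3)
        using xs(2) v(2) le_plus_iff sS vs by (intro sum_mono) blast
      also have "\<dots> = v x" using psum_measure[OF vs xs(1)] by simp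
      finally show "e \<le> v x" .
    qed
    then show "le_plus p j v" using le_plus_iff[OF jsm vs] by blast
  qed
  then show ?thesis by blast
qed

lemma main_nary:
  assumes pea: "pea p z u" and rdp: "RDP p" and n: "n \<ge> 1" and mJ: "\<forall>i<n. m i \<in> JJ p"
  shows "(\<exists>j. is_lub_in (le_plus p) (JJ p) (m ` {..<n}) j \<and>
            (\<forall>x. bdd_above (Dn p n m x) \<and> j x = Sup (Dn p n m x))) \<and>
         (\<exists>k. is_glb_in (le_plus p) (JJ p) (m ` {..<n}) k \<and>
            (\<forall>x. bdd_below (Dn p n m x) \<and> k x = Inf (Dn p n m x)))"
proof
  show "\<exists>j. is_lub_in (le_plus p) (JJ p) (m ` {..<n}) j \<and>
            (\<forall>x. bdd_above (Dn p n m x) \<and> j x = Sup (Dn p n m x))"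
  proof -
    have N: "(\<forall>x. Dn p n m x \<noteq> {} \<and> bdd_above (Dn p n m x)) \<and>
      is_lub_in (le_plus p) (JJ p) (m ` {..<n}) (\<lambda>x. Sup (Dn p n m x))" using nary[OF pea rdp n mJ] .
    show ?thesis by (rule exI[of _ "\<lambda>x. Sup (Dn p n m x)"]) (use N in simp)
  qed
next
  have mJ': "\<forall>i<n. (\<lambda>i. - m i) i \<in> JJ p" using mJ JJ_uminus by blast
  note N = nary[OF pea rdp n mJ']
  define l where "l = (\<lambda>x. Sup (Dn p n (\<lambda>i. - m i) x))"
  have "is_glb_in (le_plus p) (JJ p) (m ` {..<n}) (- l)"
    using glb_from_lub N unfolding l_def by blast
  moreover have "bdd_below (Dn p n m x) \<and> (- l) x = Inf (Dn p n m x)" for x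
  proof
    show "bdd_below (Dn p n m x)" using N Dn_neg[of p n m x] bdd_below_of_neg by metis
    show "(- l) x = Inf (Dn p n m x)" unfolding l_def Inf_real_def Dn_neg by simp
  qed
  ultimately show "\<exists>k. is_glb_in (le_plus p) (JJ p) (m ` {..<n}) k \<and>
            (\<forall>x. bdd_below (Dn p n m x) \<and> k x = Inf (Dn p n m x))" by blast
qed

lemma lat2:
  assumes pea: "pea p z u" and rdp: "RDP p" and f: "f \<in> JJ p" and g: "g \<in> JJ p"
  shows "(\<exists>l. is_lub_in (le_plus p) (JJ p) {f, g} l) \<and> (\<exists>l. is_glb_in (le_plus p) (JJ p) {f, g} l)"
proof -
  define m where "m = (\<lambda>i::nat. if i = 0 then f else g)"
  have mJ: "\<forall>i<2. m i \<in> JJ p" using f g unfolding m_def by auto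
  have img: "m ` {..<2} = {f, g}" unfolding m_def by (auto simp: lessThan_nat_numeral image_iff)
  from main_nary[OF pea rdp _ mJ] img
  show ?thesis by auto
qed

lemma riesz:
  assumes pea: "pea p z u" and rdp: "RDP p"
  shows "riesz_space (JJ p) (le_plus p)"
  unfolding riesz_space_def
proof (intro conjI ballI allI impI)
  show "0 \<in> JJ p" by (rule JJ_zero)
  fix f g assume f: "f \<in> JJ p" and g: "g \<in> JJ p"
  show "f + g \<in> JJ p" using JJ_plus f g .
  show "f + g = g + f" by (rule add.commute)
  show "le_plus p f g \<and> le_plus p g f \<Longrightarrow> f = g"
    using le_plus_JJ[OF f g] le_plus_JJ[OF g f] by (auto simp: fun_eq_iff intro: antisym)
  fix h assume h: "h \<in> JJ p"
  show "le_plus p f g \<and> le_plus p g h \<Longrightarrow> le_plus p f h" using le_plus_trans_JJ[OF f g h] by blast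
  show "le_plus p f g \<Longrightarrow> le_plus p (f + h) (g + h)"
  proof -
    assume "le_plus p f g"
    moreover have "(g + h) - (f + h) = g - f" by (simp add: fun_eq_iff)
    ultimately show ?thesis unfolding le_plus_def by simp
  qed
next
  fix f assume f: "f \<in> JJ p"
  show "le_plus p f f" using le_plus_JJ[OF f f] by simp
  fix c :: real
  show "(\<lambda>x. c * f x) \<in> JJ p" using JJ_scale f .
next
  fix f g and c :: real assume "f \<in> JJ p" "g \<in> JJ p" and cfg: "0 \<le> c \<and> le_plus p f g"
  have "(\<lambda>x. c * g x) - (\<lambda>x. c * f x) = (\<lambda>x. c * (g - f) x)" by (simp add: fun_eq_iff algebra_simps)
  then show "le_plus p (\<lambda>x. c * f x) (\<lambda>x. c * g x)"
    using pm_scale[of p "g - f" c] cfg unfolding le_plus_def by simp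
qed (use lat2[OF pea rdp] in blast)+

theorem theorem3p6:
  fixes p :: "'a \<Rightarrow> 'a \<Rightarrow> 'a option" and z u :: 'a
  assumes "pea p z u" and "RDP p"
  shows "riesz_space (JJ p) (le_plus p) \<and> dedekind_complete (le_plus p) (JJ p) \<and>
    (\<forall>(n::nat) (m :: nat \<Rightarrow> 'a \<Rightarrow> real). n \<ge> 1 \<and> (\<forall>i<n. m i \<in> JJ p) \<longrightarrow>
       (\<exists>j. is_lub_in (le_plus p) (JJ p) (m ` {..<n}) j \<and>
          (\<forall>x. let D = {(\<Sum>i<n. m i (xs ! i)) | xs. length xs = n \<and> psum p xs = Some x}
               in bdd_above D \<and> j x = Sup D)) \<and>
       (\<exists>k. is_glb_in (le_plus p) (JJ p) (m ` {..<n}) k \<and>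
          (\<forall>x. let D = {(\<Sum>i<n. m i (xs ! i)) | xs. length xs = n \<and> psum p xs = Some x}
               in bdd_below D \<and> k x = Inf D)))"
proof (intro conjI allI impI)
  show "riesz_space (JJ p) (le_plus p)" using riesz[OF assms] .
  show "dedekind_complete (le_plus p) (JJ p)"
    unfolding dedekind_complete_def using dc[OF assms] by blast
  fix n :: nat and m :: "nat \<Rightarrow> 'a \<Rightarrow> real"
  assume nm: "1 \<le> n \<and> (\<forall>i<n. m i \<in> JJ p)"
  note M = main_nary[OF assms conjunct1[OF nm] conjunct2[OF nm]]
  show "\<exists>j. is_lub_in (le_plus p) (JJ p) (m ` {..<n}) j \<and>
          (\<forall>x. let D = {(\<Sum>i<n. m i (xs ! i)) | xs. length xs = n \<and> psum p xs = Some x}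
               in bdd_above D \<and> j x = Sup D)"
    using conjunct1[OF M] unfolding Dn_def Let_def .
  show "\<exists>k. is_glb_in (le_plus p) (JJ p) (m ` {..<n}) k \<and>
          (\<forall>x. let D = {(\<Sum>i<n. m i (xs ! i)) | xs. length xs = n \<and> psum p xs = Some x}
               in bdd_below D \<and> k x = Inf D)"
    using conjunct2[OF M] unfolding Dn_def Let_def .
qed

end
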